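(* Suppose that random variables $X',Y',X'',Y''$ satisfy (1) $(X',Y')\overset{d}{=}(X'',Y'')$; (2) $((X',Y'),(X'',Y''))\overset{d}{=}((X',Y''),(X'',Y'))$; (3) $(X',Y')$ and $(X'',Y'')$ are independent. Then $X',X'',Y',Y''$ are independent.
   Context: $\overset{d}{=}$ denotes equality in distribution. *)

theory Defs
  imports "HOL-Probability.Probability"
begin

end

theory Submission
  imports Defs
begin

theorem mainTheorem5:
  fixes M :: "'w measure" and S T :: "'a measure"
    and X1 Y1 X2 Y2 :: "'w \<Rightarrow> 'a"
  assumes "prob_space M"
    and "X1 \<in> measurable M S" and "X2 \<in> measurable M S"
    and "Y1 \<in> measurable M T" and "Y2 \<in> measurable M T"
    and "distr M (S \<Otimes>\<^sub>M T) (\<lambda>\<omega>. (X1 \<omega>, Y1 \<omega>))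
         = distr M (S \<Otimes>\<^sub>M T) (\<lambda>\<omega>. (X2 \<omega>, Y2 \<omega>))"
    and "distr M ((S \<Otimes>\<^sub>M T) \<Otimes>\<^sub>M (S \<Otimes>\<^sub>M T))
           (\<lambda>\<omega>. ((X1 \<omega>, Y1 \<omega>), (X2 \<omega>, Y2 \<omega>)))
         = distr M ((S \<Otimes>\<^sub>M T) \<Otimes>\<^sub>M (S \<Otimes>\<^sub>M T))
           (\<lambda>\<omega>. ((X1 \<omega>, Y2 \<omega>), (X2 \<omega>, Y1 \<omega>)))"
    and "prob_space.indep_var M (S \<Otimes>\<^sub>M T) (\<lambda>\<omega>. (X1 \<omega>, Y1 \<omega>))
           (S \<Otimes>\<^sub>M T) (\<lambda>\<omega>. (X2 \<omega>, Y2 \<omega>))"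
  shows "prob_space.indep_vars M (\<lambda>i. [S, S, T, T] ! i) (\<lambda>i. [X1, X2, Y1, Y2] ! i) {..<4}"
proof -
  interpret prob_space M by fact
  note m = assms(2-5)
  have mp1[measurable]: "(\<lambda>\<omega>. (X1 \<omega>, Y1 \<omega>)) \<in> measurable M (S \<Otimes>\<^sub>M T)"
    using m by measurable
  have mp2[measurable]: "(\<lambda>\<omega>. (X2 \<omega>, Y2 \<omega>)) \<in> measurable M (S \<Otimes>\<^sub>M T)"
    using m by measurable
  have mq1: "(\<lambda>\<omega>. ((X1 \<omega>, Y1 \<omega>), (X2 \<omega>, Y2 \<omega>))) \<in> measurable M ((S \<Otimes>\<^sub>M T) \<Otimes>\<^sub>M (S \<Otimes>\<^sub>M T))"
    using m by measurable
  have mq2: "(\<lambda>\<omega>. ((X1 \<omega>, Y2 \<omega>), (X2 \<omega>, Y1 \<omega>))) \<in> measurable M ((S \<Otimes>\<^sub>M T) \<Otimes>\<^sub>M (S \<Otimes>\<^sub>M T))"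
    using m by measurable
  define f where "f A B C D = prob {w\<in>space M. X1 w \<in> A \<and> Y1 w \<in> B \<and> X2 w \<in> C \<and> Y2 w \<in> D}" for A B C D
  define g where "g A B = prob {w\<in>space M. X1 w \<in> A \<and> Y1 w \<in> B}" for A B
  have swap: "f A B C D = prob {w\<in>space M. X1 w \<in> A \<and> Y2 w \<in> B \<and> X2 w \<in> C \<and> Y1 w \<in> D}"
    if "A \<in> sets S" "B \<in> sets T" "C \<in> sets S" "D \<in> sets T" for A B C D
  proof -
    have R: "(A \<times> B) \<times> (C \<times> D) \<in> sets ((S \<Otimes>\<^sub>M T) \<Otimes>\<^sub>M (S \<Otimes>\<^sub>M T))" using that by auto
    have "f A B C D = measure (distr M ((S \<Otimes>\<^sub>M T) \<Otimes>\<^sub>M (S \<Otimes>\<^sub>M T))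
           (\<lambda>\<omega>. ((X1 \<omega>, Y1 \<omega>), (X2 \<omega>, Y2 \<omega>)))) ((A \<times> B) \<times> (C \<times> D))"
      unfolding f_def by (subst measure_distr[OF mq1 R]) (auto intro!: arg_cong[where f=prob])
    also have "\<dots> = measure (distr M ((S \<Otimes>\<^sub>M T) \<Otimes>\<^sub>M (S \<Otimes>\<^sub>M T))
           (\<lambda>\<omega>. ((X1 \<omega>, Y2 \<omega>), (X2 \<omega>, Y1 \<omega>)))) ((A \<times> B) \<times> (C \<times> D))"
      using assms(7) by simp
    also have "\<dots> = prob {w\<in>space M. X1 w \<in> A \<and> Y2 w \<in> B \<and> X2 w \<in> C \<and> Y1 w \<in> D}"
      by (subst measure_distr[OF mq2 R]) (auto intro!: arg_cong[where f=prob])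
    finally show ?thesis .
  qed
  have ind: "f A B C D = g A B * prob {w\<in>space M. X2 w \<in> C \<and> Y2 w \<in> D}"
    if "A \<in> sets S" "B \<in> sets T" "C \<in> sets S" "D \<in> sets T" for A B C D
  proof -
    have i: "indep_set
      (sigma_sets (space M) { (\<lambda>\<omega>. (X1 \<omega>, Y1 \<omega>)) -` E \<inter> space M | E. E \<in> sets (S \<Otimes>\<^sub>M T)})
      (sigma_sets (space M) { (\<lambda>\<omega>. (X2 \<omega>, Y2 \<omega>)) -` E \<inter> space M | E. E \<in> sets (S \<Otimes>\<^sub>M T)})"
      using assms(8) by (simp add: indep_var_eq)
    have a: "(\<lambda>\<omega>. (X1 \<omega>, Y1 \<omega>)) -` (A \<times> B) \<inter> space M \<in>
        sigma_sets (space M) { (\<lambda>\<omega>. (X1 \<omega>, Y1 \<omega>)) -` E \<inter> space M | E. E \<in> sets (S \<Otimes>\<^sub>M T)}"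
      using that by (intro sigma_sets.Basic) blast
    have b: "(\<lambda>\<omega>. (X2 \<omega>, Y2 \<omega>)) -` (C \<times> D) \<inter> space M \<in>
        sigma_sets (space M) { (\<lambda>\<omega>. (X2 \<omega>, Y2 \<omega>)) -` E \<inter> space M | E. E \<in> sets (S \<Otimes>\<^sub>M T)}"
      using that by (intro sigma_sets.Basic) blast
    have "prob (((\<lambda>\<omega>. (X1 \<omega>, Y1 \<omega>)) -` (A \<times> B) \<inter> space M) \<inter> ((\<lambda>\<omega>. (X2 \<omega>, Y2 \<omega>)) -` (C \<times> D) \<inter> space M))
      = prob ((\<lambda>\<omega>. (X1 \<omega>, Y1 \<omega>)) -` (A \<times> B) \<inter> space M) * prob ((\<lambda>\<omega>. (X2 \<omega>, Y2 \<omega>)) -` (C \<times> D) \<inter> space M)"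
      using i a b unfolding indep_sets2_eq by blast
    moreover have "((\<lambda>\<omega>. (X1 \<omega>, Y1 \<omega>)) -` (A \<times> B) \<inter> space M) \<inter> ((\<lambda>\<omega>. (X2 \<omega>, Y2 \<omega>)) -` (C \<times> D) \<inter> space M)
       = {w\<in>space M. X1 w \<in> A \<and> Y1 w \<in> B \<and> X2 w \<in> C \<and> Y2 w \<in> D}" by auto
    moreover have "(\<lambda>\<omega>. (X1 \<omega>, Y1 \<omega>)) -` (A \<times> B) \<inter> space M = {w\<in>space M. X1 w \<in> A \<and> Y1 w \<in> B}" by auto
    moreover have "(\<lambda>\<omega>. (X2 \<omega>, Y2 \<omega>)) -` (C \<times> D) \<inter> space M = {w\<in>space M. X2 w \<in> C \<and> Y2 w \<in> D}" by auto
    ultimately show ?thesis unfolding f_def g_def by simp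
  qed
  have same: "prob {w\<in>space M. X2 w \<in> C \<and> Y2 w \<in> D} = g C D"
    if "C \<in> sets S" "D \<in> sets T" for C D
  proof -
    have R: "C \<times> D \<in> sets (S \<Otimes>\<^sub>M T)" using that by auto
    have "g C D = measure (distr M (S \<Otimes>\<^sub>M T) (\<lambda>\<omega>. (X1 \<omega>, Y1 \<omega>))) (C \<times> D)"
      unfolding g_def by (subst measure_distr[OF mp1 R]) (auto intro!: arg_cong[where f=prob])
    also have "\<dots> = measure (distr M (S \<Otimes>\<^sub>M T) (\<lambda>\<omega>. (X2 \<omega>, Y2 \<omega>))) (C \<times> D)"
      using assms(6) by simp
    also have "\<dots> = prob {w\<in>space M. X2 w \<in> C \<and> Y2 w \<in> D}"
      by (subst measure_distr[OF mp2 R]) (auto intro!: arg_cong[where f=prob])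
    finally show ?thesis by simp
  qed
  define pX1 where "pX1 A = prob {w\<in>space M. X1 w \<in> A}" for A
  define pY1 where "pY1 B = prob {w\<in>space M. Y1 w \<in> B}" for B
  have sX: "X1 w \<in> space S" "X2 w \<in> space S" if "w \<in> space M" for w
    using measurable_space[OF m(1) that] measurable_space[OF m(2) that] by auto
  have sY: "Y1 w \<in> space T" "Y2 w \<in> space T" if "w \<in> space M" for w
    using measurable_space[OF m(3) that] measurable_space[OF m(4) that] by auto
  have gX: "g A (space T) = pX1 A" for A
    unfolding g_def pX1_def using sY by (auto intro!: arg_cong[where f=prob])
  have gY: "g (space S) B = pY1 B" for B
    unfolding g_def pY1_def using sX by (auto intro!: arg_cong[where f=prob])
  have X2m: "prob {w\<in>space M. X2 w \<in> A} = pX1 A" if "A \<in> sets S" for A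
  proof -
    have "{w\<in>space M. X2 w \<in> A} = {w\<in>space M. X2 w \<in> A \<and> Y2 w \<in> space T}" using sY by auto
    then show ?thesis using same[OF that sets.top] gX by simp
  qed
  have Y2m: "prob {w\<in>space M. Y2 w \<in> B} = pY1 B" if "B \<in> sets T" for B
  proof -
    have "{w\<in>space M. Y2 w \<in> B} = {w\<in>space M. X2 w \<in> space S \<and> Y2 w \<in> B}" using sX by auto
    then show ?thesis using same[OF sets.top that] gY by simp
  qed
  have gprod: "g A B = pX1 A * pY1 B" if "A \<in> sets S" "B \<in> sets T" for A B
  proof -
    have "g A B = prob {w\<in>space M. X1 w \<in> A \<and> Y2 w \<in> space T \<and> X2 w \<in> space S \<and> Y1 w \<in> B}"
      unfolding g_def using sX sY by (auto intro!: arg_cong[where f=prob])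
    also have "\<dots> = f A (space T) (space S) B"
      using swap[OF that(1) sets.top sets.top that(2)] by simp
    also have "\<dots> = g A (space T) * g (space S) B"
      using ind[OF that(1) sets.top sets.top that(2)] same[OF sets.top that(2)] by simp
    finally show ?thesis using gX gY by simp
  qed
  have key: "prob {w\<in>space M. X1 w \<in> A \<and> Y1 w \<in> B \<and> X2 w \<in> C \<and> Y2 w \<in> D}
     = pX1 A * pY1 B * pX1 C * pY1 D"
    if "A \<in> sets S" "B \<in> sets T" "C \<in> sets S" "D \<in> sets T" for A B C D
    using ind[OF that] same[OF that(3,4)] gprod that unfolding f_def by simp
  have pX1m: "pX1 A = prob (X1 -` A \<inter> space M)" for A unfolding pX1_def by (auto intro!: arg_cong[where f=prob])
  have pY1m: "pY1 A = prob (Y1 -` A \<inter> space M)" for A unfolding pY1_def by (auto intro!: arg_cong[where f=prob])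
  have X2m': "prob (X2 -` A \<inter> space M) = pX1 A" if "A \<in> sets S" for A
    using X2m[OF that] by (simp add: Int_commute vimage_def Collect_conj_eq)
  have Y2m': "prob (Y2 -` A \<inter> space M) = pY1 A" if "A \<in> sets T" for A
    using Y2m[OF that] by (simp add: Int_commute vimage_def Collect_conj_eq)
  have I: "{..<4::nat} = {0,1,2,3}" by auto
  let ?F = "\<lambda>i. {([X1, X2, Y1, Y2] ! i) -` A \<inter> space M | A. A \<in> sets ([S, S, T, T] ! i)}"
  show ?thesis
    unfolding indep_vars_def2
  proof
    show "\<forall>i\<in>{..<4}. random_variable ([S, S, T, T] ! i) ([X1, X2, Y1, Y2] ! i)"
      using m by (auto simp: I)
    show "indep_sets ?F {..<4}"
    proof (subst indep_sets_finite)
      show "{..<4::nat} \<noteq> {}" "finite {..<4::nat}" by (auto simp: I)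
      show "?F i \<subseteq> events" if "i \<in> {..<4}" for i
        using that m by (auto simp: I)
      show "space M \<in> ?F i" if "i \<in> {..<4}" for i
      proof -
        have "([X1, X2, Y1, Y2] ! i) -` space ([S, S, T, T] ! i) \<inter> space M = space M"
          using that sX sY by (auto simp: I)
        moreover have "space ([S, S, T, T] ! i) \<in> sets ([S, S, T, T] ! i)" by simp
        ultimately show ?thesis by (metis (mono_tags, lifting) mem_Collect_eq)
      qed
      show "\<forall>E\<in>Pi {..<4} ?F. prob (\<Inter> (E ` {..<4})) = (\<Prod>j\<in>{..<4}. prob (E j))"
      proof
        fix E assume E: "E \<in> Pi {..<4} ?F"
        have E0: "E 0 \<in> ?F 0" and E1: "E 1 \<in> ?F 1" and E2: "E 2 \<in> ?F 2" and E3: "E 3 \<in> ?F 3"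
          using Pi_mem[OF E, of 0] Pi_mem[OF E, of 1] Pi_mem[OF E, of 2] Pi_mem[OF E, of 3]
          by (simp_all add: I)
        from E0 obtain A where A: "A \<in> sets S" "E 0 = X1 -` A \<inter> space M" by auto
        from E1 obtain C where C: "C \<in> sets S" "E 1 = X2 -` C \<inter> space M" by auto
        from E2 obtain B where B: "B \<in> sets T" "E 2 = Y1 -` B \<inter> space M" by (auto simp: numeral_eq_Suc)
        from E3 obtain D where D: "D \<in> sets T" "E 3 = Y2 -` D \<inter> space M" by (auto simp: numeral_eq_Suc)
        note AB = A(1) C(1) B(1) D(1)
        note e = A(2) C(2) B(2) D(2)
        have "\<Inter> (E ` {..<4}) = {w\<in>space M. X1 w \<in> A \<and> Y1 w \<in> B \<and> X2 w \<in> C \<and> Y2 w \<in> D}"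
          unfolding I using e by auto
        then have "prob (\<Inter> (E ` {..<4})) = pX1 A * pY1 B * pX1 C * pY1 D"
          using key[OF AB(1,3,2,4)] by simp
        moreover have "(\<Prod>j\<in>{..<4}. prob (E j)) = prob (E 0) * prob (E 1) * prob (E 2) * prob (E 3)"
          unfolding I by simp
        ultimately show "prob (\<Inter> (E ` {..<4})) = (\<Prod>j\<in>{..<4}. prob (E j))"
          using e AB X2m' Y2m' pX1m pY1m by simp
      qed
    qed
  qed
qed

end
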